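(* Let $f:[0,1]\to\mathbb{R}$ with $f(0),f(1)\in\mathbb{Z}$, let $n\in\mathbb{N}_+$, $n\ge 2$, and let $\Phi_n:[0,1]\to\mathbb{R}$ satisfy \[ \Phi_n\left(\tfrac{2}{n}\right)-2\Phi_n\left(\tfrac{1}{n}\right)+\Phi_n(0)\ge\frac12\left(2\binom{n}{1}^{-1}+\binom{n}{2}^{-1}\right), \] \[ \Phi_n\left(\tfrac{k+2}{n}\right)-2\Phi_n\left(\tfrac{k+1}{n}\right)+\Phi_n\left(\tfrac{k}{n}\right)\ge\frac12\left(\binom{n}{k}^{-1}+2\binom{n}{k+1}^{-1}+\binom{n}{k+2}^{-1}\right),\quad k=1,\dots,n-3\ (\text{when } n\ge4), \] \[ \Phi_n(1)-2\Phi_n\left(\tfrac{n-1}{n}\right)+\Phi_n\left(\tfrac{n-2}{n}\right)\ge\frac12\left(\binom{n}{n-2}^{-1}+2\binom{n}{n-1}^{-1}\right). \] (a) If $f(x)-\Phi_n(x)$ is convex on $[0,1]$, then $\widehat{B}_n(f)$ is convex on $[0,1]$. (b) If $f(x)+\Phi_n(x)$ is concave on $[0,1]$, then $\widehat{B}_n(f)$ is concave on $[0,1]$.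
   Context: For $n\in\mathbb{N}_+$ and $f:[0,1]\to\mathbb{R}$, $\widehat{B}_n(f)(x):=\sum_{k=0}^n \left\langle f\left(\frac{k}{n}\right)\binom{n}{k}\right\rangle x^k(1-x)^{n-k}$, where $\langle\alpha\rangle$ is the integer nearest to $\alpha$ (when $\alpha$ is a half-integer, $\langle\alpha\rangle$ may be either neighbouring integer, chosen arbitrarily; the result holds for any such choice). *)

theory Defs
  imports "HOL-Analysis.Analysis"
begin

text \<open>A nearest-integer rounding function: any function r with |r a - a| <= 1/2 for all a.
  At half-integers either neighbouring integer may be chosen (arbitrarily).\<close>
definition nearest_int_rounding :: "(real \<Rightarrow> int) \<Rightarrow> bool" where
  "nearest_int_rounding r \<longleftrightarrow> (\<forall>a. \<bar>real_of_int (r a) - a\<bar> \<le> 1/2)"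

definition bhat :: "(real \<Rightarrow> int) \<Rightarrow> nat \<Rightarrow> (real \<Rightarrow> real) \<Rightarrow> real \<Rightarrow> real" where
  "bhat r n f x = (\<Sum>k=0..n. real_of_int (r (f (real k / real n) * real (n choose k)))
                      * x ^ k * (1 - x) ^ (n - k))"

end

theory Submission imports Defs begin

definition Bb :: "nat \<Rightarrow> nat \<Rightarrow> real \<Rightarrow> real" where
  "Bb m k x = real (m choose k) * x ^ k * (1 - x) ^ (m - k)"

definition Bb1 :: "nat \<Rightarrow> nat \<Rightarrow> real \<Rightarrow> real" where
  "Bb1 m k x = (if k = 0 then 0 else Bb m (k - 1) x)"

lemma Bb_deriv: "(Bb (Suc m) k has_real_derivative real (Suc m) * (Bb1 m k x - Bb m k x)) (at x)"
proof (cases k)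
  case 0
  show ?thesis unfolding 0 Bb_def Bb1_def
    by (rule derivative_eq_intros refl | simp)+
next
  case (Suc j)
  have e1: "real (Suc j) * real (Suc m choose Suc j) = real (Suc m) * real (m choose j)"
    using Suc_times_binomial_eq[of m j] by (metis of_nat_mult mult.commute)
  have e2: "real (m - j) * real (Suc m choose Suc j) = real (Suc m) * real (m choose Suc j)"
    using binomial_absorb_comp[of "Suc m" "Suc j"] by (metis of_nat_mult diff_Suc_Suc diff_Suc_1)
  have "(Bb (Suc m) (Suc j) has_real_derivative
      real (Suc m choose Suc j) * (real (Suc j) * x ^ j * (1 - x) ^ (m - j)
        - x ^ Suc j * (real (m - j) * (1 - x) ^ (m - j - 1)))) (at x)"
    unfolding Bb_def
    by (rule derivative_eq_intros refl | simp)+ (simp add: algebra_simps)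
  moreover have "real (Suc m choose Suc j) * (real (Suc j) * x ^ j * (1 - x) ^ (m - j)
        - x ^ Suc j * (real (m - j) * (1 - x) ^ (m - j - 1)))
     = real (Suc m) * (Bb1 m (Suc j) x - Bb m (Suc j) x)"
  proof -
    have "real (Suc m choose Suc j) * (real (Suc j) * x ^ j * (1 - x) ^ (m - j))
         = (real (Suc j) * real (Suc m choose Suc j)) * (x ^ j * (1 - x) ^ (m - j))"
      by (simp only: mult_ac)
    also have "\<dots> = real (Suc m) * real (m choose j) * (x ^ j * (1 - x) ^ (m - j))"
      by (simp only: e1)
    finally have "real (Suc m choose Suc j) * (real (Suc j) * x ^ j * (1 - x) ^ (m - j))
         = real (Suc m) * Bb m j x" unfolding Bb_def by (simp only: mult_ac)
    moreover have "real (Suc m choose Suc j) * (x ^ Suc j * (real (m - j) * (1 - x) ^ (m - j - 1)))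
         = real (Suc m) * Bb m (Suc j) x"
    proof (cases "j < m")
      case True
      have "real (Suc m choose Suc j) * (x ^ Suc j * (real (m - j) * (1 - x) ^ (m - j - 1)))
         = (real (m - j) * real (Suc m choose Suc j)) * (x ^ Suc j * (1 - x) ^ (m - Suc j))"
        by (simp only: mult_ac diff_Suc_eq_diff_pred diff_commute[of m 1 j])
      also have "\<dots> = real (Suc m) * real (m choose Suc j) * (x ^ Suc j * (1 - x) ^ (m - Suc j))"
        by (simp only: e2)
      finally show ?thesis unfolding Bb_def by (simp only: mult_ac)
    next
      case False
      then show ?thesis unfolding Bb_def by simp
    qed
    ultimately show ?thesis unfolding Bb1_def by (simp add: algebra_simps)
  qed
  ultimately show ?thesis using Suc by simp
qed

lemma sum_deriv:
  "((\<lambda>x. \<Sum>k=0..Suc m. b k * Bb (Suc m) k x) has_real_derivative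
     real (Suc m) * (\<Sum>k=0..m. (b (Suc k) - b k) * Bb m k x)) (at x)"
proof -
  have "((\<lambda>x. \<Sum>k=0..Suc m. b k * Bb (Suc m) k x) has_real_derivative
     (\<Sum>k=0..Suc m. b k * (real (Suc m) * (Bb1 m k x - Bb m k x)))) (at x)"
    by (intro DERIV_sum DERIV_cmult Bb_deriv)
  moreover have "(\<Sum>k=0..Suc m. b k * (real (Suc m) * (Bb1 m k x - Bb m k x)))
     = real (Suc m) * (\<Sum>k=0..m. (b (Suc k) - b k) * Bb m k x)"
  proof -
    have a: "(\<Sum>k=0..Suc m. b k * Bb1 m k x) = (\<Sum>k=0..m. b (Suc k) * Bb m k x)"
      by (subst sum.atLeast0_atMost_Suc_shift) (simp add: Bb1_def)
    have b: "(\<Sum>k=0..Suc m. b k * Bb m k x) = (\<Sum>k=0..m. b k * Bb m k x)"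
      by (simp add: Bb_def)
    have "(\<Sum>k=0..Suc m. b k * (real (Suc m) * (Bb1 m k x - Bb m k x)))
       = (\<Sum>k=0..Suc m. real (Suc m) * (b k * Bb1 m k x) - real (Suc m) * (b k * Bb m k x))"
      by (intro sum.cong refl) (simp add: algebra_simps)
    also have "\<dots> = real (Suc m) * ((\<Sum>k=0..Suc m. b k * Bb1 m k x) - (\<Sum>k=0..Suc m. b k * Bb m k x))"
      by (simp only: sum_subtractf sum_distrib_left right_diff_distrib)
    also have "\<dots> = real (Suc m) * ((\<Sum>k=0..m. b (Suc k) * Bb m k x) - (\<Sum>k=0..m. b k * Bb m k x))"
      by (simp only: a b)
    also have "\<dots> = real (Suc m) * (\<Sum>k=0..m. (b (Suc k) - b k) * Bb m k x)"
      by (simp only: sum_subtractf left_diff_distrib)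
    finally show ?thesis .
  qed
  ultimately show ?thesis by simp
qed

lemma Bb_nonneg: "x \<in> {0..1} \<Longrightarrow> Bb m k x \<ge> 0"
  unfolding Bb_def by auto

lemma bern_convex:
  assumes "\<And>k. k \<le> m \<Longrightarrow> b (k + 2) - 2 * b (k + 1) + b k \<ge> 0"
  shows "convex_on {0..1} (\<lambda>x. \<Sum>k=0..Suc (Suc m). b k * Bb (Suc (Suc m)) k x)"
proof (rule f''_ge0_imp_convex)
  show "convex {0..1::real}" by simp
  fix x :: real
  show "((\<lambda>x. \<Sum>k=0..Suc (Suc m). b k * Bb (Suc (Suc m)) k x) has_real_derivative
     real (Suc (Suc m)) * (\<Sum>k=0..Suc m. (b (Suc k) - b k) * Bb (Suc m) k x)) (at x)"
    by (rule sum_deriv)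
  show "((\<lambda>x. real (Suc (Suc m)) * (\<Sum>k=0..Suc m. (b (Suc k) - b k) * Bb (Suc m) k x)) has_real_derivative
     real (Suc (Suc m)) * (real (Suc m) * (\<Sum>k=0..m. ((b (Suc (Suc k)) - b (Suc k)) - (b (Suc k) - b k)) * Bb m k x))) (at x)"
    using DERIV_cmult[OF sum_deriv[of "\<lambda>k. b (Suc k) - b k" m x], of "real (Suc (Suc m))"] by simp
  assume x: "x \<in> {0..1}"
  have "(\<Sum>k=0..m. ((b (Suc (Suc k)) - b (Suc k)) - (b (Suc k) - b k)) * Bb m k x) \<ge> 0"
  proof (intro sum_nonneg mult_nonneg_nonneg Bb_nonneg[OF x])
    fix k assume "k \<in> {0..m}"
    then show "0 \<le> b (Suc (Suc k)) - b (Suc k) - (b (Suc k) - b k)"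
      using assms[of k] by (simp add: numeral_2_eq_2)
  qed
  then show "0 \<le> real (Suc (Suc m)) * (real (Suc m) * (\<Sum>k=0..m. ((b (Suc (Suc k)) - b (Suc k)) - (b (Suc k) - b k)) * Bb m k x))"
    by simp
qed


lemma midpt:
  assumes g: "convex_on {0..1} g" and n: "n > 0" and k: "k + 2 \<le> n"
  shows "g (real (k+1) / real n) \<le> (g (real k / real n) + g (real (k+2) / real n)) / 2"
proof -
  have "g ((1 - 1/2) * (real k / real n) + (1/2) * (real (k+2) / real n))
     \<le> (1 - 1/2) * g (real k / real n) + (1/2) * g (real (k+2) / real n)"
    using k n convex_onD[OF g, of "1/2" "real k / real n" "real (k+2) / real n"] by (auto simp: field_simps)
  moreover have "(1 - 1/2) * (real k / real n) + (1/2) * (real (k+2) / real n) = real (k+1) / real n"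
    using n by (simp add: field_simps)
  ultimately show ?thesis by simp
qed

theorem proposition3p3:
  fixes f \<Phi> :: "real \<Rightarrow> real" and n :: nat and r :: "real \<Rightarrow> int"
  assumes r: "nearest_int_rounding r"
    and f0: "f 0 \<in> \<int>" and f1: "f 1 \<in> \<int>"
    and n: "n \<ge> 2"
    and first: "\<Phi> (2 / real n) - 2 * \<Phi> (1 / real n) + \<Phi> 0
        \<ge> 1/2 * (2 / real (n choose 1) + 1 / real (n choose 2))"
    and middle: "\<And>k. 1 \<le> k \<Longrightarrow> k \<le> n - 3 \<Longrightarrow>
        \<Phi> (real (k + 2) / real n) - 2 * \<Phi> (real (k + 1) / real n) + \<Phi> (real k / real n)
        \<ge> 1/2 * (1 / real (n choose k) + 2 / real (n choose (k + 1)) + 1 / real (n choose (k + 2)))"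
    and last: "\<Phi> 1 - 2 * \<Phi> (real (n - 1) / real n) + \<Phi> (real (n - 2) / real n)
        \<ge> 1/2 * (1 / real (n choose (n - 2)) + 2 / real (n choose (n - 1)))"
  shows "(convex_on {0..1} (\<lambda>x. f x - \<Phi> x) \<longrightarrow> convex_on {0..1} (bhat r n f))
       \<and> (concave_on {0..1} (\<lambda>x. f x + \<Phi> x) \<longrightarrow> concave_on {0..1} (bhat r n f))"
proof -
  obtain m where nm: "n = Suc (Suc m)" using n by (metis add_2_eq_Suc le_Suc_ex)
  define C where "C k = real (n choose k)" for k
  define F where "F k = f (real k / real n)" for k
  define P where "P k = \<Phi> (real k / real n)" for k
  define b where "b k = real_of_int (r (F k * C k)) / C k" for k
  have Cpos: "k \<le> n \<Longrightarrow> C k > 0" for k unfolding C_def by simp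
  have err: "k \<le> n \<Longrightarrow> \<bar>b k - F k\<bar> \<le> 1/2 * (1 / C k)" for k
  proof -
    assume k: "k \<le> n"
    have "\<bar>real_of_int (r (F k * C k)) - F k * C k\<bar> \<le> 1/2"
      using r unfolding nearest_int_rounding_def by blast
    moreover have "b k - F k = (real_of_int (r (F k * C k)) - F k * C k) / C k"
      unfolding b_def using Cpos[OF k] by (simp add: field_simps)
    ultimately show ?thesis using Cpos[OF k] divide_right_mono[of "\<bar>real_of_int (r (F k * C k)) - F k * C k\<bar>" "1/2" "C k"]
      by (simp add: abs_div)
  qed
  have intexact: "a \<in> \<int> \<Longrightarrow> real_of_int (r a) = a" for a
  proof -
    assume "a \<in> \<int>"
    then obtain z where z: "a = real_of_int z" by (auto elim: Ints_cases)
    have "\<bar>real_of_int (r a - z)\<bar> \<le> 1/2" using r z unfolding nearest_int_rounding_def by simp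
    hence "\<bar>r a - z\<bar> < 1" by linarith
    hence "r a = z" by linarith
    thus ?thesis using z by simp
  qed
  have b0: "b 0 = F 0" unfolding b_def F_def C_def using intexact[OF f0] by simp
  have bn: "b n = F n" unfolding b_def F_def C_def using intexact[OF f1] n by simp
  have key: "\<bar>(b (k+2) - 2 * b (k+1) + b k) - (F (k+2) - 2 * F (k+1) + F k)\<bar>
       \<le> P (k+2) - 2 * P (k+1) + P k" if k: "k \<le> m" for k
  proof -
    have e0: "\<bar>b k - F k\<bar> \<le> 1/2 * (1 / C k)" "\<bar>b (k+1) - F (k+1)\<bar> \<le> 1/2 * (1 / C (k+1))"
      "\<bar>b (k+2) - F (k+2)\<bar> \<le> 1/2 * (1 / C (k+2))" using k nm err[of k] err[of "k+1"] err[of "k+2"] by auto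
    consider "k = 0" | "k \<noteq> 0" "k = m" | "k \<noteq> 0" "k < m" using k by linarith
    then show ?thesis
    proof cases
      case 1
      have "P 2 - 2 * P 1 + P 0 \<ge> 1/2 * (2 / C 1 + 1 / C 2)"
        using first unfolding P_def C_def by simp
      moreover have "\<bar>b 1 - F 1\<bar> \<le> 1/2 * (1 / C 1)" "\<bar>b 2 - F 2\<bar> \<le> 1/2 * (1 / C 2)"
        using err[of 1] err[of 2] nm by auto
      ultimately have "\<bar>(b 2 - 2 * b 1 + b 0) - (F 2 - 2 * F 1 + F 0)\<bar> \<le> P 2 - 2 * P 1 + P 0"
        using b0 divide_inverse[of 2 "C 1"] unfolding abs_le_iff by (intro conjI; simp; linarith)
      then show ?thesis using 1 by (simp add: numeral_2_eq_2)
    next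
      case 2
      have "P (k+2) - 2 * P (k+1) + P k \<ge> 1/2 * (1 / C k + 2 / C (k+1))"
        using last 2 nm unfolding P_def C_def by (simp add: add.commute)
      moreover have "b (k+2) = F (k+2)" using bn 2 nm by simp
      ultimately show ?thesis using e0 divide_inverse[of 2 "C (k+1)"] unfolding abs_le_iff by (intro conjI; simp; linarith)
    next
      case 3
      have "P (k+2) - 2 * P (k+1) + P k \<ge> 1/2 * (1 / C k + 2 / C (k+1) + 1 / C (k+2))"
        using middle[of k] 3 nm unfolding P_def C_def by simp
      then show ?thesis using e0 divide_inverse[of 2 "C (k+1)"] unfolding abs_le_iff by (intro conjI; simp; linarith)
    qed
  qed
  have bh: "bhat r n f = (\<lambda>x. \<Sum>k=0..Suc (Suc m). b k * Bb (Suc (Suc m)) k x)"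
  proof
    fix x
    show "bhat r n f x = (\<Sum>k=0..Suc (Suc m). b k * Bb (Suc (Suc m)) k x)"
      unfolding bhat_def nm[symmetric]
    proof (intro sum.cong refl)
      fix k assume "k \<in> {0..n}"
      then have "C k > 0" using Cpos by simp
      then show "real_of_int (r (f (real k / real n) * real (n choose k))) * x ^ k * (1 - x) ^ (n - k)
          = b k * Bb n k x"
        unfolding b_def Bb_def F_def C_def by (simp add: field_simps)
    qed
  qed
  have mp: "\<And>g k. convex_on {0..1} g \<Longrightarrow> k \<le> m \<Longrightarrow>
      g (real (k+1) / real n) \<le> (g (real k / real n) + g (real (k+2) / real n)) / 2"
    using midpt[of _ n] nm by simp
  show ?thesis
  proof (intro conjI impI)
    assume cv: "convex_on {0..1} (\<lambda>x. f x - \<Phi> x)"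
    show "convex_on {0..1} (bhat r n f)" unfolding bh
    proof (rule bern_convex)
      fix k assume k: "k \<le> m"
      show "b (k + 2) - 2 * b (k + 1) + b k \<ge> 0"
        using mp[OF cv k] key[OF k] unfolding F_def P_def by (simp add: abs_le_iff)
    qed
  next
    assume cc: "concave_on {0..1} (\<lambda>x. f x + \<Phi> x)"
    have cv: "convex_on {0..1} (\<lambda>x. - (f x + \<Phi> x))" using cc by (simp add: concave_on_def)
    have "convex_on {0..1} (\<lambda>x. \<Sum>k=0..Suc (Suc m). (- b k) * Bb (Suc (Suc m)) k x)"
    proof (rule bern_convex)
      fix k assume k: "k \<le> m"
      show "- b (k + 2) - 2 * - b (k + 1) + - b k \<ge> 0"
        using mp[OF cv k] key[OF k] unfolding F_def P_def by (simp add: abs_le_iff)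
    qed
    then show "concave_on {0..1} (bhat r n f)" unfolding bh concave_on_def
      by (simp add: sum_negf)
  qed
qed

end
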